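(* Let $\Delta=\{x_0,\dots,x_d\}$ and $\Delta'=\{y_0,\dots,y_d\}$ be vertex sets of two regular simplices of edge length $1$ in $\mathbb{R}^d$. If $\mathrm{diam}(\Delta\cup\Delta')=1$, then $\Delta=\Delta'$.
   Context: A regular simplex of edge length $1$ in $\mathbb{R}^d$ is given by its vertex set: $d+1$ points at pairwise Euclidean distance exactly $1$. $\mathrm{diam}(A)=\sup_{x,y\in A}\|x-y\|_2$. *)

theory Defs
  imports "HOL-Analysis.Analysis"
begin

definition regular_unit_simplex :: "(nat \<Rightarrow> real^'n) \<Rightarrow> bool" where
  "regular_unit_simplex x \<longleftrightarrow>
     (\<forall>i\<le>CARD('n). \<forall>j\<le>CARD('n). i \<noteq> j \<longrightarrow> dist (x i) (x j) = 1)"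

end

theory Submission
  imports Defs
begin

definition cen :: "(nat \<Rightarrow> real^'n) \<Rightarrow> real^'n" where
  "cen x = (1 / (real CARD('n) + 1)) *\<^sub>R (\<Sum>i\<le>CARD('n). x i)"

lemma dist_sq_inner: "(dist a b)^2 = inner (a - b) (a - b)" for a b :: "real^'n"
  by (simp add: dist_norm power2_norm_eq_inner)

lemma inner_diff_self:
  fixes p q :: "real^'n"
  shows "inner (p - q) (p - q) = inner p p + inner q q - 2 * inner p q"
  by (simp add: inner_diff_left inner_diff_right inner_commute[of q p])

lemma inner_add_self:
  fixes p q :: "real^'n"
  shows "inner (p + q) (p + q) = inner p p + inner q q + 2 * inner p q"
  by (simp add: inner_add_left inner_add_right inner_commute[of q p])

lemma cen_sum:
  fixes x :: "nat \<Rightarrow> real^'n"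
  shows "(\<Sum>i\<le>CARD('n). x i - cen x) = 0"
proof -
  have "(\<Sum>i\<le>CARD('n). x i - cen x) = (\<Sum>i\<le>CARD('n). x i) - (real CARD('n) + 1) *\<^sub>R cen x"
    by (simp only: sum_subtractf sum_constant_scaleR card_atMost) (simp add: add.commute)
  also have "\<dots> = 0" unfolding cen_def by simp
  finally show ?thesis .
qed

lemma gram:
  fixes x :: "nat \<Rightarrow> real^'n"
  assumes reg: "regular_unit_simplex x" and i: "i \<le> CARD('n)" and j: "j \<le> CARD('n)"
  shows "inner (x i - cen x) (x j - cen x) =
     (if i = j then real CARD('n) / (2 * (real CARD('n) + 1)) else - 1 / (2 * (real CARD('n) + 1)))"
proof -
  define d where "d = CARD('n)"
  define G where "G a b = inner (x a - cen x) (x b - cen x)" for a b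
  have rowsum: "(\<Sum>b\<le>d. G a b) = 0" for a
    unfolding G_def d_def by (simp add: inner_sum_right[symmetric] cen_sum)
  have off: "G a a + G b b - 2 * G a b = 1" if "a \<le> d" "b \<le> d" "a \<noteq> b" for a b
  proof -
    have "dist (x a) (x b) = 1" using reg that unfolding regular_unit_simplex_def d_def by auto
    hence "inner (x a - x b) (x a - x b) = 1" using dist_sq_inner[of "x a" "x b"] by simp
    moreover have eq: "(x a - cen x) - (x b - cen x) = x a - x b" by simp
    ultimately have "inner ((x a - cen x) - (x b - cen x)) ((x a - cen x) - (x b - cen x)) = 1" unfolding eq by simp
    thus ?thesis unfolding G_def by (simp only: inner_diff_self)
  qed
  define T where "T = (\<Sum>b\<le>d. G b b)"
  have diag: "G a a = (real d - T) / (real d + 1)" if "a \<le> d" for a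
  proof -
    have "(\<Sum>b\<le>d. G a a + G b b - 2 * G a b) = (\<Sum>b\<le>d. 1 - (if b = a then 1 else 0))"
      by (rule sum.cong) (auto intro: off[OF that])
    also have "\<dots> = real d" using that by (simp add: sum_subtractf)
    moreover have "(\<Sum>b\<le>d. G a a + G b b - 2 * G a b) = (real d + 1) * G a a + T - 2 * (\<Sum>b\<le>d. G a b)"
      unfolding T_def by (simp add: sum.distrib sum_subtractf sum_distrib_left)
    ultimately have "(real d + 1) * G a a + T - 2 * 0 = real d" using rowsum[of a] by simp
    thus ?thesis by (simp add: field_simps)
  qed
  have "(\<Sum>b\<le>d. G b b) = (\<Sum>b\<le>d. (real d - T) / (real d + 1))" by (rule sum.cong) (auto simp: diag)
  hence "T = (\<Sum>b\<le>d. (real d - T) / (real d + 1))" unfolding T_def .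
  also have "\<dots> = real d - T" by (simp add: add.commute)
  finally have T: "T = real d / 2" by simp
  have dg: "G a a = real d / (2 * (real d + 1))" if "a \<le> d" for a
    using diag[OF that] T by (simp add: field_simps)
  show ?thesis
  proof (cases "i = j")
    case True thus ?thesis using dg i unfolding G_def d_def by simp
  next
    case False
    have "G i j = (G i i + G j j - 1) / 2" using off[of i j] i j False unfolding d_def by simp
    also have "\<dots> = (real d / (2 * (real d + 1)) + real d / (2 * (real d + 1)) - 1) / 2"
      using dg i j unfolding d_def by simp
    also have "\<dots> = - 1 / (2 * (real d + 1))"
    proof -
      define ee where "ee = real d + 1"
      have rd: "real d = ee - 1" unfolding ee_def by simp
      have "ee > 0" unfolding ee_def by simp
      thus ?thesis unfolding rd by (simp add: field_simps)
    qed
    finally show ?thesis using False unfolding G_def d_def by simp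
  qed
qed


lemma vgram:
  fixes x :: "nat \<Rightarrow> real^'n"
  assumes reg: "regular_unit_simplex x" and l: "l < CARD('n)" and m: "m < CARD('n)"
  shows "inner (x l - x CARD('n)) (x m - x CARD('n)) = (if l = m then 1 else 1/2)"
proof -
  define d where "d = CARD('n)"
  have D: "dist (x a) (x b) = 1" if "a \<le> d" "b \<le> d" "a \<noteq> b" for a b
    using reg that unfolding regular_unit_simplex_def d_def by auto
  have N: "inner (x a - x b) (x a - x b) = 1" if "a \<le> d" "b \<le> d" "a \<noteq> b" for a b
    using D[OF that] dist_sq_inner[of "x a" "x b"] by simp
  show ?thesis
  proof (cases "l = m")
    case True thus ?thesis using N[of l d] l unfolding d_def by simp
  next
    case False
    have eq: "(x l - x d) - (x m - x d) = x l - x m" by simp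
    have "inner ((x l - x d) - (x m - x d)) ((x l - x d) - (x m - x d)) = 1"
      unfolding eq using N[of l m] l m False unfolding d_def by simp
    hence "inner (x l - x d) (x l - x d) + inner (x m - x d) (x m - x d) - 2 * inner (x l - x d) (x m - x d) = 1"
      by (simp only: inner_diff_self)
    thus ?thesis using N[of l d] N[of m d] l m False unfolding d_def by simp
  qed
qed

lemma span_full:
  fixes x :: "nat \<Rightarrow> real^'n"
  assumes reg: "regular_unit_simplex x"
  shows "span ((\<lambda>l. x l - x CARD('n)) ` {..<CARD('n)}) = UNIV"
proof -
  define d where "d = CARD('n)"
  define v where "v l = x l - x d" for l
  define S where "S = v ` {..<d}"
  have inj: "inj_on v {..<d}"
  proof (rule inj_onI)
    fix a b assume "a \<in> {..<d}" "b \<in> {..<d}" "v a = v b"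
    hence "x a = x b" "a \<le> d" "b \<le> d" unfolding v_def by auto
    thus "a = b" using reg unfolding regular_unit_simplex_def d_def by force
  qed
  have cardS: "card S = dim (UNIV :: (real^'n) set)" unfolding S_def d_def
    using card_image[OF inj] by (simp add: d_def)
  have finS: "finite S" unfolding S_def by simp
  have G: "inner (v a) (v b) = 1/2 + (if a = b then 1/2 else 0)" if "a < d" "b < d" for a b
    using vgram[OF reg, of a b] that unfolding v_def d_def by simp
  have "independent S"
  proof
    assume "dependent S"
    then obtain u where u: "\<exists>s\<in>S. u s \<noteq> 0" "(\<Sum>s\<in>S. u s *\<^sub>R s) = 0"
      using dependent_finite[OF finS] by blast
    define c where "c l = u (v l)" for l
    have z: "(\<Sum>l<d. c l *\<^sub>R v l) = 0" using u(2) unfolding S_def c_def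
      by (simp add: sum.reindex[OF inj])
    have "0 = inner (\<Sum>l<d. c l *\<^sub>R v l) (\<Sum>m<d. c m *\<^sub>R v m)" using z by simp
    also have "\<dots> = (\<Sum>l<d. \<Sum>m<d. c l * c m * inner (v l) (v m))"
      by (simp add: inner_sum_left inner_sum_right sum_distrib_left mult.assoc)
        (intro sum.cong refl, simp add: inner_commute[of "v _" "v _"])
    also have "\<dots> = (\<Sum>l<d. \<Sum>m<d. c l * c m * (1/2 + (if l = m then 1/2 else 0)))"
      by (intro sum.cong refl) (simp add: G)
    also have "\<dots> = (\<Sum>l<d. \<Sum>m<d. c l * c m / 2 + (if l = m then (c l)^2/2 else 0))"
      by (intro sum.cong refl) (auto simp: power2_eq_square algebra_simps)
    also have "\<dots> = (\<Sum>l<d. \<Sum>m<d. c l * c m / 2) + (\<Sum>l<d. (c l)^2 / 2)"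
      by (simp add: sum.distrib)
    also have "(\<Sum>l<d. \<Sum>m<d. c l * c m / 2) = (\<Sum>l<d. c l)^2 / 2"
      by (simp add: power2_eq_square sum_distrib_left sum_distrib_right sum_divide_distrib)
        (intro sum.cong refl, simp)
    finally have eq: "0 = (\<Sum>l<d. c l)^2 / 2 + (\<Sum>l<d. (c l)^2 / 2)" .
    have "(\<Sum>l<d. (c l)^2 / 2) = 0" using eq
      by (smt (verit) sum_nonneg zero_le_power2 divide_nonneg_pos)
    hence "\<forall>l\<in>{..<d}. (c l)^2 / 2 = 0"
      by (subst sum_nonneg_eq_0_iff[symmetric]) auto
    hence "\<forall>l<d. c l = 0" by simp
    thus False using u(1) unfolding S_def c_def by auto
  qed
  hence "UNIV \<subseteq> span S" using card_eq_dim[OF subset_UNIV cardS finS] by simp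
  thus ?thesis unfolding S_def v_def d_def by auto
qed


lemma frame:
  fixes x :: "nat \<Rightarrow> real^'n"
  assumes reg: "regular_unit_simplex x"
  shows "(\<Sum>i\<le>CARD('n). (inner u (x i - cen x))^2) = (norm u)^2 / 2"
proof -
  define d where "d = CARD('n)"
  define w where "w i = x i - cen x" for i
  define F where "F u = (\<Sum>i\<le>d. inner u (w i) *\<^sub>R w i)" for u
  have sw: "(\<Sum>i\<le>d. w i) = 0" unfolding w_def d_def by (rule cen_sum)
  have Fw: "F (w l) = (1/2) *\<^sub>R w l" if l: "l \<le> d" for l
  proof -
    have "F (w l) = (\<Sum>i\<le>d. (- 1 / (2 * (real d + 1)) + (if i = l then 1/2 else 0)) *\<^sub>R w i)"
      unfolding F_def
    proof (intro sum.cong refl)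
      fix i assume "i \<in> {..d}"
      thus "inner (w l) (w i) *\<^sub>R w i = (- 1 / (2 * (real d + 1)) + (if i = l then 1/2 else 0)) *\<^sub>R w i"
        using gram[OF reg, of l i] l unfolding w_def d_def by (auto simp: field_simps)
    qed
    also have "\<dots> = (- 1 / (2 * (real d + 1))) *\<^sub>R (\<Sum>i\<le>d. w i) + (\<Sum>i\<le>d. (if i = l then 1/2 else 0) *\<^sub>R w i)"
      by (simp only: scaleR_add_left sum.distrib scaleR_sum_right)
    also have "\<dots> = (1/2) *\<^sub>R w l" using l by (simp add: sw if_distrib[of "\<lambda>a. a *\<^sub>R _"] sum.delta cong: if_cong)
    finally show ?thesis .
  qed
  have Fs: "F (a *\<^sub>R z) = a *\<^sub>R F z" for a z
    unfolding F_def by (simp add: scaleR_sum_right inner_scaleR_left)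
  have Fa: "F (z1 + z2) = F z1 + F z2" for z1 z2
    unfolding F_def by (simp add: inner_add_left scaleR_add_left sum.distrib)
  have F0: "F 0 = 0" unfolding F_def by simp
  have sub: "subspace {u. F u = (1/2) *\<^sub>R u}"
    unfolding subspace_def by (auto simp: Fs Fa F0 scaleR_add_right)
  have "F u = (1/2) *\<^sub>R u"
  proof (rule span_induct[where S = "w ` {..d}" and P = "\<lambda>u. F u = (1/2) *\<^sub>R u" and x = u])
    have "UNIV = span ((\<lambda>l. x l - x d) ` {..<d})" using span_full[OF reg] unfolding d_def by simp
    also have "\<dots> \<subseteq> span (w ` {..d})"
    proof (rule span_minimal[OF _ subspace_span])
      show "(\<lambda>l. x l - x d) ` {..<d} \<subseteq> span (w ` {..d})"
      proof
        fix z assume "z \<in> (\<lambda>l. x l - x d) ` {..<d}"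
        then obtain l where "l < d" "z = x l - x d" by auto
        hence "z = w l - w d" unfolding w_def by simp
        thus "z \<in> span (w ` {..d})" using \<open>l < d\<close>
          by (simp add: span_diff span_base)
      qed
    qed
    finally show "u \<in> span (w ` {..d})" by auto
  next
    show "subspace {u. F u = (1/2) *\<^sub>R u}" by (rule sub)
  next
    fix z assume "z \<in> w ` {..d}" thus "F z = (1/2) *\<^sub>R z" using Fw by auto
  qed
  hence "inner u (F u) = (norm u)^2 / 2" by (simp add: power2_norm_eq_inner)
  moreover have "inner u (F u) = (\<Sum>i\<le>d. (inner u (w i))^2)"
    unfolding F_def by (simp add: inner_sum_right power2_eq_square)
  ultimately show ?thesis unfolding w_def d_def by simp
qed


lemma R1:
  fixes t :: "nat \<Rightarrow> real"
  assumes fin: "finite I" and ne: "I \<noteq> {}" and le: "\<And>j. j \<in> I \<Longrightarrow> t j \<le> M"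
    and s0: "(\<Sum>j\<in>I. t j) = 0"
  shows "M \<ge> 0 \<and> (\<Sum>j\<in>I. (t j)^2) \<le> (real (card I) - 1) * real (card I) * M^2"
proof -
  define n where "n = real (card I)"
  define s where "s j = M - t j" for j
  have sn: "(\<Sum>j\<in>I. s j) = n * M" unfolding s_def n_def using s0 by (simp add: sum_subtractf)
  have snn: "s j \<ge> 0" if "j \<in> I" for j using le[OF that] unfolding s_def by simp
  have n1: "n \<ge> 1" unfolding n_def using fin ne by (simp add: Suc_leI card_gt_0_iff)
  have "0 \<le> (\<Sum>j\<in>I. s j)" by (rule sum_nonneg) (use snn in auto)
  hence M0: "M \<ge> 0" using sn n1 by (simp add: zero_le_mult_iff)
  have "s j ^2 \<le> s j * (\<Sum>i\<in>I. s i)" if "j \<in> I" for j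
  proof -
    have "s j \<le> (\<Sum>i\<in>I. s i)" using member_le_sum[OF that, of s] snn fin by auto
    thus ?thesis using snn[OF that] by (simp add: power2_eq_square mult_left_mono)
  qed
  hence "(\<Sum>j\<in>I. s j ^2) \<le> (\<Sum>j\<in>I. s j * (\<Sum>i\<in>I. s i))" by (rule sum_mono)
  also have "\<dots> = (n * M)^2" by (simp add: sum_distrib_right[symmetric] sn power2_eq_square)
  finally have ss: "(\<Sum>j\<in>I. s j ^2) \<le> (n * M)^2" .
  have "(\<Sum>j\<in>I. (t j)^2) = (\<Sum>j\<in>I. M^2 - 2 * M * s j + s j ^2)"
    by (rule sum.cong) (auto simp: s_def power2_eq_square algebra_simps)
  also have "\<dots> = n * M^2 - 2 * M * (n * M) + (\<Sum>j\<in>I. s j ^2)"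
    by (simp add: sum.distrib sum_subtractf sum_distrib_left[symmetric] sn n_def)
  also have "\<dots> \<le> n * M^2 - 2 * M * (n * M) + (n * M)^2" using ss by simp
  also have "\<dots> = (n - 1) * n * M^2" by (simp add: power2_eq_square algebra_simps)
  finally show ?thesis using M0 unfolding n_def by simp
qed

lemma R2:
  fixes s :: "nat \<Rightarrow> real"
  assumes fin: "finite I" and nn: "\<And>j. j \<in> I \<Longrightarrow> s j \<ge> 0"
    and eq: "(\<Sum>j\<in>I. (s j)^2) = (\<Sum>j\<in>I. s j)^2" and pos: "(\<Sum>j\<in>I. s j) > 0"
  shows "\<exists>k\<in>I. s k = (\<Sum>j\<in>I. s j)"
proof -
  have ne: "I \<noteq> {}" using pos by auto
  define mx where "mx = Max (s ` I)"
  have "mx \<in> s ` I" unfolding mx_def using fin ne by (intro Max_in) auto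
  then obtain k where k: "k \<in> I" "s k = mx" by auto
  have "s j ^2 \<le> s j * mx" if "j \<in> I" for j
  proof -
    have "s j \<le> mx" unfolding mx_def using fin that by simp
    thus ?thesis using nn[OF that] by (simp add: power2_eq_square mult_left_mono)
  qed
  hence "(\<Sum>j\<in>I. s j ^2) \<le> (\<Sum>j\<in>I. s j * mx)" by (rule sum_mono)
  hence "(\<Sum>j\<in>I. s j)^2 \<le> (\<Sum>j\<in>I. s j) * mx" using eq by (simp add: sum_distrib_right)
  hence "(\<Sum>j\<in>I. s j) \<le> mx" using pos by (simp add: power2_eq_square)
  moreover have "s k \<le> (\<Sum>j\<in>I. s j)" using member_le_sum[OF k(1), of s] nn fin by auto
  ultimately have "s k = (\<Sum>j\<in>I. s j)" using k by auto
  thus ?thesis using k(1) by blast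
qed


lemma dist_le1_inner:
  fixes a b :: "real^'n"
  assumes "dist a b \<le> 1"
  shows "inner (b - a) (b - a) \<le> 1"
proof -
  have "(dist a b)^2 \<le> 1" using assms by (simp add: power_le_one)
  thus ?thesis using dist_sq_inner[of b a] by (simp add: dist_commute)
qed

lemma incl:
  fixes x y :: "nat \<Rightarrow> real^'n"
  assumes rx: "regular_unit_simplex x" and ry: "regular_unit_simplex y"
    and dxy: "\<And>i j. i \<le> CARD('n) \<Longrightarrow> j \<le> CARD('n) \<Longrightarrow> dist (x i) (y j) \<le> 1"
  shows "y ` {..CARD('n)} \<subseteq> x ` {..CARD('n)}"
proof -
  define d where "d = CARD('n)"
  have dxy': "\<And>i j. i \<le> d \<Longrightarrow> j \<le> d \<Longrightarrow> dist (x i) (y j) \<le> 1" using dxy unfolding d_def .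
  define e where "e = real d + 1"
  define r2 where "r2 = real d / (2 * e)"
  have e1: "e \<ge> 1" unfolding e_def by simp
  define c where "c = cen x"
  define c' where "c' = cen y"
  define h where "h = c' - c"
  have gx: "inner (x i - c) (x i - c) = r2" if "i \<le> d" for i
    using gram[OF rx that[unfolded d_def] that[unfolded d_def]] unfolding c_def r2_def e_def d_def by simp
  have gy: "inner (y i - c') (y i - c') = r2" if "i \<le> d" for i
    using gram[OF ry that[unfolded d_def] that[unfolded d_def]] unfolding c'_def r2_def e_def d_def by simp
  have sx: "(\<Sum>i\<le>d. x i - c) = 0" unfolding c_def d_def by (rule cen_sum)
  have sy: "(\<Sum>i\<le>d. y i - c') = 0" unfolding c'_def d_def by (rule cen_sum)
  have fx: "(\<Sum>i\<le>d. (inner u (x i - c))^2) = inner u u / 2" for u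
    using frame[OF rx, of u] unfolding c_def d_def by (simp add: power2_norm_eq_inner)
  have fy: "(\<Sum>i\<le>d. (inner u (y i - c'))^2) = inner u u / 2" for u
    using frame[OF ry, of u] unfolding c'_def d_def by (simp add: power2_norm_eq_inner)
  obtain k where k: "k \<le> d" "inner (x k - c) h \<le> 0"
  proof (rule ccontr)
    assume "\<not> thesis"
    hence "\<forall>k\<in>{..d}. inner (x k - c) h > 0" using that by force
    hence "(\<Sum>k\<le>d. inner (x k - c) h) > 0" by (intro sum_pos) auto
    moreover have "(\<Sum>k\<le>d. inner (x k - c) h) = 0" by (simp add: inner_sum_left[symmetric] sx)
    ultimately show False by simp
  qed
  define u where "u = c' - x k"
  define q where "q = inner u u"
  have "u = h - (x k - c)" unfolding u_def h_def by simp
  hence "q = inner h h + inner (x k - c) (x k - c) - 2 * inner h (x k - c)" unfolding q_def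
    by (simp only: inner_diff_self)
  hence "q = inner h h + r2 - 2 * inner (x k - c) h" using gx[OF k(1)] inner_commute[of h "x k - c"]
    by simp
  hence q: "q \<ge> inner h h + r2" using k(2) by simp
  define t where "t j = inner u (y j - c')" for j
  have st: "(\<Sum>j\<le>d. t j) = 0" unfolding t_def by (simp add: inner_sum_right[symmetric] sy)
  have tt: "(\<Sum>j\<le>d. (t j)^2) = q / 2" unfolding t_def q_def by (rule fy)
  have tle: "t j \<le> (1 - r2 - q) / 2" if "j \<le> d" for j
  proof -
    have "inner (y j - x k) (y j - x k) \<le> 1" using dist_le1_inner[OF dxy'[OF k(1) that]] by simp
    moreover have eq: "u + (y j - c') = y j - x k" unfolding u_def by simp
    ultimately have "inner (u + (y j - c')) (u + (y j - c')) \<le> 1" unfolding eq by simp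
    hence "q + r2 + 2 * t j \<le> 1" unfolding q_def t_def using inner_add_self[of u "y j - c'"] gy[OF that] by linarith
    thus ?thesis by simp
  qed
  have R: "(1 - r2 - q) / 2 \<ge> 0 \<and> (\<Sum>j\<le>d. (t j)^2) \<le> (real (card {..d}) - 1) * real (card {..d}) * ((1 - r2 - q) / 2)^2"
    by (rule R1) (use tle st in auto)
  define D where "D = 1 - r2 - q"
  have D0: "D \<ge> 0" using R unfolding D_def by simp
  have qD: "q \<le> real d * e * D^2 / 2" using R tt unfolding D_def e_def
    by (simp add: power_divide algebra_simps)
  have r2e: "1 - 2 * r2 = 1 / e" unfolding r2_def e_def by (simp add: field_simps)
  have hh0: "inner h h \<ge> 0" by simp
  have De: "D \<le> 1 / e" unfolding D_def using q hh0 r2e by linarith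
  have "D^2 \<le> (1/e)^2" using D0 De by (intro power_mono) auto
  hence "real d * e * D^2 / 2 \<le> real d * e * (1/e)^2 / 2" using e1
    by (intro divide_right_mono mult_left_mono) auto
  also have "\<dots> = r2" unfolding r2_def using e1 by (simp add: power2_eq_square field_simps)
  finally have "q \<le> r2" using qD by linarith
  hence "inner h h = 0" using q hh0 by linarith
  hence cc: "c' = c" unfolding h_def by simp
  show ?thesis
  proof
    fix z assume "z \<in> y ` {..CARD('n)}"
    then obtain j where j: "j \<le> d" "z = y j" unfolding d_def by auto
    define p where "p = y j - c"
    have pp: "inner p p = r2" using gy[OF j(1)] cc unfolding p_def by simp
    define t2 where "t2 k = inner p (x k - c)" for k
    have st2: "(\<Sum>k\<le>d. t2 k) = 0" unfolding t2_def by (simp add: inner_sum_right[symmetric] sx)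
    have tt2: "(\<Sum>k\<le>d. (t2 k)^2) = r2 / 2" unfolding t2_def using fx[of p] pp by simp
    define s where "s k = t2 k + 1 / (2 * e)" for k
    have sge: "s k \<ge> 0" if "k \<le> d" for k
    proof -
      have "inner (y j - x k) (y j - x k) \<le> 1" using dist_le1_inner[OF dxy'[OF that j(1)]] by simp
      moreover have eq: "p - (x k - c) = y j - x k" unfolding p_def by simp
      ultimately have "inner (p - (x k - c)) (p - (x k - c)) \<le> 1" unfolding eq by simp
      hence "r2 + r2 - 2 * t2 k \<le> 1" unfolding t2_def using inner_diff_self[of p "x k - c"] gx[OF that] pp by linarith
      thus ?thesis unfolding s_def using r2e by (simp add: field_simps)
    qed
    have ss: "(\<Sum>k\<le>d. s k) = 1/2" unfolding s_def using st2 e1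
      by (simp add: sum.distrib e_def)
    have "(\<Sum>k\<le>d. (s k)^2) = (\<Sum>k\<le>d. (t2 k)^2 + (1/e) * t2 k + 1 / (4 * e^2))"
      unfolding s_def using e1 by (intro sum.cong refl) (simp add: power2_eq_square field_simps)
    also have "\<dots> = r2 / 2 + (1/e) * 0 + e / (4 * e^2)"
      by (simp add: sum.distrib sum_distrib_left[symmetric] sum_divide_distrib[symmetric] tt2 st2 e_def)
    also have "\<dots> = 1/4"
    proof -
      have de: "real d = e - 1" unfolding e_def by simp
      show ?thesis unfolding r2_def de using e1 by (simp add: field_simps power2_eq_square)
    qed
    finally have A: "(\<Sum>k\<le>d. (s k)^2) = 1/4" .
    have B: "(\<Sum>k\<le>d. s k)^2 = 1/4" unfolding ss by (simp add: power2_eq_square)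
    have ss2: "(\<Sum>k\<le>d. (s k)^2) = (\<Sum>k\<le>d. s k)^2" using A B by linarith
    obtain k where k: "k \<in> {..d}" "s k = (\<Sum>k\<le>d. s k)"
      using R2[of "{..d}" s] sge ss2 ss by auto
    hence "s k = 1/2" using ss by simp
    hence "t2 k = 1/2 - 1/(2*e)" unfolding s_def by simp
    moreover have "r2 = 1/2 - 1/(2*e)" using r2e by simp
    ultimately have "t2 k = r2" by simp
    hence "inner (p - (x k - c)) (p - (x k - c)) = 0" unfolding t2_def using inner_diff_self[of p "x k - c"] gx[OF k(1)[simplified]] pp
      by linarith
    hence "p = x k - c" by simp
    hence "z = x k" unfolding p_def using j by simp
    thus "z \<in> x ` {..CARD('n)}" using k(1) unfolding d_def by auto
  qed
qed


theorem mainTheorem6: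
  fixes x y :: "nat \<Rightarrow> real^'n"
  assumes "regular_unit_simplex x" and "regular_unit_simplex y"
    and "diameter (x ` {..CARD('n)} \<union> y ` {..CARD('n)}) = 1"
  shows "x ` {..CARD('n)} = y ` {..CARD('n)}"
proof -
  define S where "S = x ` {..CARD('n)} \<union> y ` {..CARD('n)}"
  have bS: "bounded S" unfolding S_def by (intro finite_imp_bounded) auto
  have D: "dist (x i) (y j) \<le> 1" if "i \<le> CARD('n)" "j \<le> CARD('n)" for i j
  proof -
    have "x i \<in> S" "y j \<in> S" using that unfolding S_def by auto
    hence "dist (x i) (y j) \<le> diameter S" by (intro diameter_bounded_bound[OF bS])
    thus ?thesis using assms(3) unfolding S_def by simp
  qed
  have "y ` {..CARD('n)} \<subseteq> x ` {..CARD('n)}" by (rule incl[OF assms(1,2)]) (rule D)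
  moreover have "x ` {..CARD('n)} \<subseteq> y ` {..CARD('n)}"
    by (rule incl[OF assms(2,1)]) (simp add: D dist_commute)
  ultimately show ?thesis by blast
qed

end
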